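(* Let $\Theta'$ be obtained from $\Theta_4$ by subdividing one edge with a bivalent vertex $v$, and let $\Theta_v$ be the explosion of $\Theta'$ at $v$; thus $\Theta_v$ has two $4$-valent vertices $u_1,u_2$ joined by three edges, and one further edge (a tail) at each $u_i$. In the exact sequence \[\cdots\to H_2(B_3(\Theta_v))\xrightarrow{\iota_*}H_2(B_3(\Theta'))\xrightarrow{\psi}H_1(B_2(\Theta_v))\xrightarrow{\delta}H_1(B_3(\Theta_v))\to\cdots\] the map $\psi$ sends a generator of $H_2(B_3(\Theta'))\cong H_2(B_3(\Theta_4))\cong\mathbb{Z}$ to $\pm$ the star class at $u_1$ determined by the three half-edges at $u_1$ lying on the three edges joining $u_1$ and $u_2$ (which is, up to sign, the unique non-rigid star class in $H_1(B_2(\Theta_v))$).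
   Context: Graphs are finite $1$-dimensional CW complexes; $B_k(\Gamma)$ is the configuration space of $k$ unordered points, and $H_*(B(\Gamma))$ is a module over $\mathbb{Z}[E]$ ($E$ = edges) via edge stabilization, equivalently the homology of the Świątkowski complex $S(\Gamma)=\mathbb{Z}[E]\otimes\bigotimes_v\mathbb{Z}\langle\varnothing,v,h\in H(v)\rangle$ with $\partial h=e(h)-v(h)$, bigraded by degree ($|h|=1$, others $0$) and weight ($|v|=|e|=|h|=1$, $|\varnothing|=0$). The reduced complex $\widetilde S(\Gamma)$ uses at each vertex the span of $\varnothing$ and differences of half-edges. Explosion $\Gamma_v$ of a vertex $v$: replace $v$ by $d(v)$ univalent vertices, one per half-edge at $v$. For a bivalent vertex $v$ with half-edges $h_0,h$, there is a natural exact sequence $\cdots\to H_i(B_k(\Gamma_v))\xrightarrow{\iota_*}H_i(B_k(\Gamma))\xrightarrow{\psi}H_{i-1}(B_{k-1}(\Gamma_v))\xrightarrow{\delta}H_{i-1}(B_k(\Gamma_v))\to\cdots$, where $\iota_*$ is induced by the inclusion, $\psi$ is induced by the chain map on reduced complexes sending $b+(h-h_0)a\mapsto a$ ($a,b$ involving no half-edge generators at $v$), and $\delta$ is multiplication by $e(h)-e(h_0)$. A star class is the class of a star cycle $e_3(h_1-h_2)+e_2(h_3-h_1)+e_1(h_2-h_3)$ for distinct half-edges $h_1,h_2,h_3$ at a vertex $u$ (its support), $e_i=e(h_i)$. A star cycle with support $u$ is rigid if its three half-edges do not all lie in the same connected component of $\Gamma_u$; a star class is rigid if it has a rigid representing star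 cycle, non-rigid otherwise. *)

theory Defs
  imports Main
begin

text \<open>Vertices are natural numbers; their natural
 order fixes the ordering of tensor factors (Koszul signs) in the
 Swiatkowski complex.\<close>

record graph =
  verts  :: "nat set"
  edges  :: "nat set"
  halves :: "nat set"
  hv     :: "nat \<Rightarrow> nat"
  he     :: "nat \<Rightarrow> nat"

definition H_at :: "graph \<Rightarrow> nat \<Rightarrow> nat set" where
  "H_at G v = {h \<in> halves G. hv G h = v}"

datatype gen = Emp | Vtx | Hlf nat

fun isHlf :: "gen \<Rightarrow> bool" where
  "isHlf (Hlf h) = True" | "isHlf _ = False"

text \<open>A basis monomial: an edge monomial (exponent vector) together with a choice of
 local generator at every vertex.\<close>
type_synonym mono = "(nat \<Rightarrow> nat) \<times> (nat \<Rightarrow> gen)"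
type_synonym chain = "mono \<Rightarrow> int"

definition valid_mono :: "graph \<Rightarrow> mono \<Rightarrow> bool" where
  "valid_mono G b \<longleftrightarrow>
     (\<forall>e. fst b e \<noteq> 0 \<longrightarrow> e \<in> edges G) \<and>
     (\<forall>w. w \<notin> verts G \<longrightarrow> snd b w = Emp) \<and>
     (\<forall>w h. snd b w = Hlf h \<longrightarrow> h \<in> H_at G w)"

definition mdeg :: "graph \<Rightarrow> mono \<Rightarrow> nat" where
  "mdeg G b = card {w \<in> verts G. isHlf (snd b w)}"

definition mwt :: "graph \<Rightarrow> mono \<Rightarrow> nat" where
  "mwt G b = (\<Sum>e\<in>edges G. fst b e) + card {w \<in> verts G. snd b w \<noteq> Emp}"

definition ind :: "mono \<Rightarrow> chain" where
  "ind b = (\<lambda>b'. if b' = b then 1 else 0)"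

definition ksign :: "graph \<Rightarrow> (nat \<Rightarrow> gen) \<Rightarrow> nat \<Rightarrow> int" where
  "ksign G \<sigma> w = (-1) ^ card {w' \<in> verts G. w' < w \<and> isHlf (\<sigma> w')}"

text \<open>Differential on monomials, induced by d h = e(h) - v(h) with Koszul signs.\<close>
definition bd_mono :: "graph \<Rightarrow> mono \<Rightarrow> chain" where
  "bd_mono G b = (\<lambda>b'. \<Sum>w\<in>verts G.
      (case snd b w of
         Hlf h \<Rightarrow> ksign G (snd b) w *
            (ind ((fst b)(he G h := fst b (he G h) + 1), (snd b)(w := Emp)) b'
             - ind (fst b, (snd b)(w := Vtx)) b')
       | _ \<Rightarrow> 0))"

definition supp :: "chain \<Rightarrow> mono set" where
  "supp c = {b. c b \<noteq> 0}"

definition bd :: "graph \<Rightarrow> chain \<Rightarrow> chain" where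
  "bd G c = (\<lambda>b'. \<Sum>b\<in>supp c. c b * bd_mono G b b')"

text \<open>Chains of S(G) in degree i and weight k (weight k = k particles).\<close>
definition is_chain :: "graph \<Rightarrow> nat \<Rightarrow> nat \<Rightarrow> chain \<Rightarrow> bool" where
  "is_chain G i k c \<longleftrightarrow> finite (supp c) \<and>
     (\<forall>b\<in>supp c. valid_mono G b \<and> mdeg G b = i \<and> mwt G b = k)"

definition is_cycle :: "graph \<Rightarrow> nat \<Rightarrow> nat \<Rightarrow> chain \<Rightarrow> bool" where
  "is_cycle G i k c \<longleftrightarrow> is_chain G i k c \<and> bd G c = (\<lambda>_. 0)"

definition homologous :: "graph \<Rightarrow> nat \<Rightarrow> nat \<Rightarrow> chain \<Rightarrow> chain \<Rightarrow> bool" where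
  "homologous G i k c1 c2 \<longleftrightarrow>
     (\<exists>d. is_chain G (Suc i) k d \<and> (\<lambda>b. c1 b - c2 b) = bd G d)"

text \<open>A chain lies in the subcomplex which is reduced at the bivalent vertex v with
 half-edges h0, h: its v-factor is the empty symbol or a multiple of (h - h0),
 i.e. it has the form b + (h - h0) a.\<close>
definition reduced_at :: "nat \<Rightarrow> nat \<Rightarrow> nat \<Rightarrow> chain \<Rightarrow> bool" where
  "reduced_at v h0 h c \<longleftrightarrow>
     (\<forall>m \<sigma>. c (m, \<sigma>(v := Vtx)) = 0 \<and>
            c (m, \<sigma>(v := Hlf h0)) = - c (m, \<sigma>(v := Hlf h)) \<and>
            (\<forall>h'. h' \<noteq> h \<and> h' \<noteq> h0 \<longrightarrow> c (m, \<sigma>(v := Hlf h')) = 0))"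

text \<open>psi: b + (h - h0) a \<mapsto> a.\<close>
definition psi :: "nat \<Rightarrow> nat \<Rightarrow> chain \<Rightarrow> chain" where
  "psi v h c = (\<lambda>(m, \<sigma>). if \<sigma> v = Emp then c (m, \<sigma>(v := Hlf h)) else 0)"

text \<open>Explosion at v: v is replaced by one new univalent vertex per half-edge at v;
 the new vertex for half-edge h is named new h (new must be injective and avoid
 the other vertices).\<close>
definition explode :: "graph \<Rightarrow> nat \<Rightarrow> (nat \<Rightarrow> nat) \<Rightarrow> graph" where
  "explode G v new = G\<lparr> verts := (verts G - {v}) \<union> new ` H_at G v,
                        hv := (\<lambda>x. if hv G x = v then new x else hv G x) \<rparr>"

definition star_cycle :: "graph \<Rightarrow> nat \<Rightarrow> nat \<Rightarrow> nat \<Rightarrow> nat \<Rightarrow> chain" where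
  "star_cycle G u h1 h2 h3 = (\<lambda>b.
      let t = (\<lambda>e x. ind ((\<lambda>_. 0)(e := 1), (\<lambda>_. Emp)(u := Hlf x)) b) in
      t (he G h3) h1 - t (he G h3) h2 + t (he G h2) h3 - t (he G h2) h1
      + t (he G h1) h2 - t (he G h1) h3)"

definition Theta4 :: graph where
  "Theta4 = \<lparr> verts = {0,1}, edges = {0..3}, halves = {0..7},
             hv = (\<lambda>h. h mod 2), he = (\<lambda>h. h div 2) \<rparr>"

text \<open>Theta': Theta_4 with edge 3 subdivided by the bivalent vertex 2:
 edge 3 now joins vertex 0 (half-edge 6) and vertex 2 (half-edge 7), new edge 4
 joins vertex 2 (half-edge 8) and vertex 1 (half-edge 9).\<close>
definition Theta' :: graph where
  "Theta' = \<lparr> verts = {0,1,2}, edges = {0..4}, halves = {0..9},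
             hv = (\<lambda>h. if h < 6 then h mod 2
                        else if h = 6 then 0 else if h = 9 then 1 else 2),
             he = (\<lambda>h. h div 2) \<rparr>"

text \<open>Theta_v: explosion of Theta' at v = 2; half-edge 7 goes to new vertex 17 and
 half-edge 8 to new vertex 18 (tails at u1 = 0 and u2 = 1).\<close>
definition Theta_v :: graph where
  "Theta_v = explode Theta' 2 (\<lambda>h. h + 10)"

end

theory Submission imports Defs begin

definition Lm :: "nat list \<Rightarrow> nat \<Rightarrow> nat" where "Lm es e = (if e < length es then es!e else 0)"
definition Lg :: "gen list \<Rightarrow> nat \<Rightarrow> gen" where "Lg gs w = (if w < length gs then gs!w else Emp)"
lemma Lg_simps[simp]: "Lg [] n = Emp" "Lg (g#gs) 0 = g" "Lg (g#gs) (Suc n) = Lg gs n"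
  "Lg (g#gs) (numeral k) = Lg gs (pred_numeral k)"
  by (auto simp: Lg_def numeral_eq_Suc)
lemma Lm_simps[simp]: "Lm [] n = 0" "Lm (g#gs) 0 = g" "Lm (g#gs) (Suc n) = Lm gs n"
  "Lm (g#gs) (numeral k) = Lm gs (pred_numeral k)"
  by (auto simp: Lm_def numeral_eq_Suc)
lemma sep_insert: "{w \<in> insert a A. P w} = (if P a then insert a {w \<in> A. P w} else {w \<in> A. P w})" by auto
lemma Lm_upd[simp]: "k < length es \<Longrightarrow> (Lm es)(k := v) = Lm (es[k := v])"
  by (auto simp: Lm_def fun_eq_iff)
lemma Lg_upd[simp]: "k < length es \<Longrightarrow> (Lg es)(k := v) = Lg (es[k := v])"
  by (auto simp: Lg_def fun_eq_iff)
lemma Lm_eq[simp]: "length es = length es' \<Longrightarrow> (Lm es = Lm es') = (es = es')"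
  by (auto simp: Lm_def fun_eq_iff intro: nth_equalityI)
lemma Lg_eq[simp]: "length es = length es' \<Longrightarrow> (Lg es = Lg es') = (es = es')"
  by (auto simp: Lg_def fun_eq_iff intro: nth_equalityI)

lemma verts_Tp[simp]: "verts Theta' = {0,1,2}" by (simp add: Theta'_def)
lemma edges_Tp[simp]: "edges Theta' = {0,1,2,3,4}" by (auto simp: Theta'_def)
lemma halves_Tp[simp]: "halves Theta' = {0,1,2,3,4,5,6,7,8,9}" by (auto simp: Theta'_def)
lemma he_Tp[simp]: "he Theta' = (\<lambda>h. h div 2)" by (simp add: Theta'_def)
lemma hv_Tp[simp]: "hv Theta' = (\<lambda>h. if h < 6 then h mod 2
                        else if h = 6 then 0 else if h = 9 then 1 else 2)" by (simp add: Theta'_def)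
lemma H_Tp: "H_at Theta' 0 = {0,2,4,6}" "H_at Theta' 1 = {1,3,5,9}" "H_at Theta' 2 = {7,8}"
  unfolding H_at_def halves_Tp hv_Tp by (simp only: sep_insert; simp)+
lemma verts_Tv[simp]: "verts Theta_v = {0,1,17,18}"
  by (auto simp: Theta_v_def explode_def H_Tp)
lemma edges_Tv[simp]: "edges Theta_v = {0,1,2,3,4}" by (auto simp: Theta_v_def explode_def)
lemma halves_Tv[simp]: "halves Theta_v = {0,1,2,3,4,5,6,7,8,9}" by (auto simp: Theta_v_def explode_def)
lemma he_Tv[simp]: "he Theta_v = (\<lambda>h. h div 2)" by (simp add: Theta_v_def explode_def)
lemma H_Tv: "H_at Theta_v 0 = {0,2,4,6}" "H_at Theta_v 1 = {1,3,5,9}"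
  unfolding H_at_def halves_Tv by (simp only: sep_insert; simp add: Theta_v_def explode_def)+

lemma H_Tv1: "H_at Theta_v (Suc 0) = {1,3,5,9}" using H_Tv(2) by simp

lemma ksign_Tp: "ksign Theta' \<sigma> 0 = 1" "ksign Theta' \<sigma> 1 = (if isHlf (\<sigma> 0) then -1 else 1)"
  "ksign Theta' \<sigma> (Suc 0) = (if isHlf (\<sigma> 0) then -1 else 1)"
  "ksign Theta' \<sigma> 2 = (if isHlf (\<sigma> 0) = isHlf (\<sigma> 1) then 1 else -1)"
  unfolding ksign_def verts_Tp by (simp only: sep_insert; simp)+
lemma ksign_Tv: "ksign Theta_v \<sigma> 0 = 1" "ksign Theta_v \<sigma> 1 = (if isHlf (\<sigma> 0) then -1 else 1)"
  "ksign Theta_v \<sigma> (Suc 0) = (if isHlf (\<sigma> 0) then -1 else 1)"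
  unfolding ksign_def verts_Tv by (simp only: sep_insert; simp)+

lemma bdm_Tp: "bd_mono Theta' (m, \<sigma>) b' =
   (case \<sigma> 0 of Hlf h \<Rightarrow> ind (m(h div 2 := m (h div 2) + 1), \<sigma>(0 := Emp)) b' - ind (m, \<sigma>(0 := Vtx)) b' | _ \<Rightarrow> 0)
 + (case \<sigma> 1 of Hlf h \<Rightarrow> (if isHlf (\<sigma> 0) then -1 else 1) *
      (ind (m(h div 2 := m (h div 2) + 1), \<sigma>(1 := Emp)) b' - ind (m, \<sigma>(1 := Vtx)) b') | _ \<Rightarrow> 0)
 + (case \<sigma> 2 of Hlf h \<Rightarrow> (if isHlf (\<sigma> 0) = isHlf (\<sigma> 1) then 1 else -1) *
      (ind (m(h div 2 := m (h div 2) + 1), \<sigma>(2 := Emp)) b' - ind (m, \<sigma>(2 := Vtx)) b') | _ \<Rightarrow> 0)"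
  unfolding bd_mono_def verts_Tp by (simp add: ksign_Tp split: gen.split)

lemma bdm_Tv: "\<sigma> 17 = Emp \<Longrightarrow> \<sigma> 18 = Emp \<Longrightarrow> bd_mono Theta_v (m, \<sigma>) b' =
   (case \<sigma> 0 of Hlf h \<Rightarrow> ind (m(h div 2 := m (h div 2) + 1), \<sigma>(0 := Emp)) b' - ind (m, \<sigma>(0 := Vtx)) b' | _ \<Rightarrow> 0)
 + (case \<sigma> 1 of Hlf h \<Rightarrow> (if isHlf (\<sigma> 0) then -1 else 1) *
      (ind (m(h div 2 := m (h div 2) + 1), \<sigma>(1 := Emp)) b' - ind (m, \<sigma>(1 := Vtx)) b') | _ \<Rightarrow> 0)"
  unfolding bd_mono_def verts_Tv by (simp add: ksign_Tv split: gen.split)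


definition lc :: "(int \<times> mono) list \<Rightarrow> chain" where
  "lc L = (\<lambda>b. sum_list (map (\<lambda>(k,X). k * ind X b) L))"

lemma supp_lc: "supp (lc L) \<subseteq> set (map snd L)"
proof (induction L)
  case Nil then show ?case by (simp add: supp_def lc_def)
next
  case (Cons p L) then show ?case
    by (cases p) (auto simp: supp_def lc_def ind_def split: if_splits)
qed

lemma bd_fin: "finite S \<Longrightarrow> supp c \<subseteq> S \<Longrightarrow> bd G c b' = (\<Sum>b\<in>S. c b * bd_mono G b b')"
  unfolding bd_def by (rule sum.mono_neutral_left) (auto simp: supp_def)

lemma sum_lc: "finite S \<Longrightarrow> set (map snd L) \<subseteq> S \<Longrightarrow>
   (\<Sum>b\<in>S. lc L b * f b) = sum_list (map (\<lambda>(k,X). k * f X) L)"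
proof (induction L)
  case Nil then show ?case by (simp add: lc_def)
next
  case (Cons p L)
  obtain k X where p: "p = (k, X)" by (cases p)
  have X: "X \<in> S" using Cons.prems p by auto
  have "(\<Sum>b\<in>S. lc (p#L) b * f b) = (\<Sum>b\<in>S. k * (ind X b * f b)) + (\<Sum>b\<in>S. lc L b * f b)"
    by (simp add: p lc_def sum.distrib algebra_simps)
  also have "(\<Sum>b\<in>S. k * (ind X b * f b)) = k * (\<Sum>b\<in>S. ind X b * f b)"
    by (simp add: sum_distrib_left)
  also have "(\<Sum>b\<in>S. ind X b * f b) = (\<Sum>b\<in>S. if b = X then f X else 0)"
    by (rule sum.cong) (auto simp: ind_def)
  also have "\<dots> = f X" using X Cons.prems by (simp add: sum.delta)
  finally show ?case using Cons by (simp add: p)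
qed

lemma bd_lc: "bd G (lc L) b' = sum_list (map (\<lambda>(k,X). k * bd_mono G X b') L)"
  using bd_fin[of "set (map snd L)" "lc L" G b', OF _ supp_lc] sum_lc[of "set (map snd L)" L] by simp

definition z0L :: "(int \<times> mono) list" where "z0L = [(1, (Lm [1,0,0,0,0], Lg [Hlf 2,Hlf 5,Emp])),
  (-1, (Lm [1,0,0,0,0], Lg [Hlf 2,Hlf 9,Emp])),
  (-1, (Lm [1,0,0,0,0], Lg [Hlf 2,Emp,Hlf 7])),
  (1, (Lm [1,0,0,0,0], Lg [Hlf 2,Emp,Hlf 8])),
  (-1, (Lm [1,0,0,0,0], Lg [Hlf 4,Hlf 3,Emp])),
  (1, (Lm [1,0,0,0,0], Lg [Hlf 4,Hlf 9,Emp])),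
  (1, (Lm [1,0,0,0,0], Lg [Hlf 4,Emp,Hlf 7])),
  (-1, (Lm [1,0,0,0,0], Lg [Hlf 4,Emp,Hlf 8])),
  (1, (Lm [1,0,0,0,0], Lg [Hlf 6,Hlf 3,Emp])),
  (-1, (Lm [1,0,0,0,0], Lg [Hlf 6,Hlf 5,Emp])),
  (-1, (Lm [0,1,0,0,0], Lg [Hlf 0,Hlf 5,Emp])),
  (1, (Lm [0,1,0,0,0], Lg [Hlf 0,Hlf 9,Emp])),
  (1, (Lm [0,1,0,0,0], Lg [Hlf 0,Emp,Hlf 7])),
  (-1, (Lm [0,1,0,0,0], Lg [Hlf 0,Emp,Hlf 8])),
  (1, (Lm [0,1,0,0,0], Lg [Hlf 4,Hlf 1,Emp])),
  (-1, (Lm [0,1,0,0,0], Lg [Hlf 4,Hlf 9,Emp])),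
  (-1, (Lm [0,1,0,0,0], Lg [Hlf 4,Emp,Hlf 7])),
  (1, (Lm [0,1,0,0,0], Lg [Hlf 4,Emp,Hlf 8])),
  (-1, (Lm [0,1,0,0,0], Lg [Hlf 6,Hlf 1,Emp])),
  (1, (Lm [0,1,0,0,0], Lg [Hlf 6,Hlf 5,Emp])),
  (1, (Lm [0,0,1,0,0], Lg [Hlf 0,Hlf 3,Emp])),
  (-1, (Lm [0,0,1,0,0], Lg [Hlf 0,Hlf 9,Emp])),
  (-1, (Lm [0,0,1,0,0], Lg [Hlf 0,Emp,Hlf 7])),
  (1, (Lm [0,0,1,0,0], Lg [Hlf 0,Emp,Hlf 8])),
  (-1, (Lm [0,0,1,0,0], Lg [Hlf 2,Hlf 1,Emp])),
  (1, (Lm [0,0,1,0,0], Lg [Hlf 2,Hlf 9,Emp])),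
  (1, (Lm [0,0,1,0,0], Lg [Hlf 2,Emp,Hlf 7])),
  (-1, (Lm [0,0,1,0,0], Lg [Hlf 2,Emp,Hlf 8])),
  (1, (Lm [0,0,1,0,0], Lg [Hlf 6,Hlf 1,Emp])),
  (-1, (Lm [0,0,1,0,0], Lg [Hlf 6,Hlf 3,Emp])),
  (-1, (Lm [0,0,0,1,0], Lg [Hlf 0,Hlf 3,Emp])),
  (1, (Lm [0,0,0,1,0], Lg [Hlf 0,Hlf 5,Emp])),
  (1, (Lm [0,0,0,1,0], Lg [Hlf 2,Hlf 1,Emp])),
  (-1, (Lm [0,0,0,1,0], Lg [Hlf 2,Hlf 5,Emp])),
  (-1, (Lm [0,0,0,1,0], Lg [Hlf 4,Hlf 1,Emp])),
  (1, (Lm [0,0,0,1,0], Lg [Hlf 4,Hlf 3,Emp]))]"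

definition z0 :: chain where "z0 = lc z0L"

lemma z0_bd: "bd Theta' z0 = (\<lambda>_. 0)"
proof
  fix b'
  show "bd Theta' z0 b' = 0"
    unfolding z0_def z0L_def bd_lc by (simp add: bdm_Tp)
qed

lemma Lm0: "Lm [0,0,0,0,0] = (\<lambda>_. 0)"
  by (auto simp: Lm_def fun_eq_iff nth_Cons split: nat.split)
lemma Lg0: "Lg [Emp,Emp,Emp] = (\<lambda>_. Emp)"
  by (auto simp: Lg_def fun_eq_iff nth_Cons split: nat.split)

lemma valid_Tp: "(\<forall>h. g0 = Hlf h \<longrightarrow> h \<in> {0,2,4,6}) \<Longrightarrow> (\<forall>h. g1 = Hlf h \<longrightarrow> h \<in> {1,3,5,9})
  \<Longrightarrow> (\<forall>h. g2 = Hlf h \<longrightarrow> h \<in> {7,8}) \<Longrightarrow> valid_mono Theta' (Lm [a,b,c,d,e], Lg [g0,g1,g2])"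
  unfolding valid_mono_def H_Tp[symmetric]
  apply (intro conjI allI impI)
    apply (auto simp: Lm_def Lg_def nth_Cons numeral_2_eq_2 split: if_splits nat.splits)
  done

lemma mdeg_Tp: "mdeg Theta' (m, Lg [g0,g1,g2]) = (if isHlf g0 then 1 else 0) + (if isHlf g1 then 1 else 0) + (if isHlf g2 then 1 else 0)"
  unfolding mdeg_def verts_Tp by (simp only: sep_insert; simp)

lemma mwt_Tp: "mwt Theta' (Lm [a,b,c,d,e], Lg [g0,g1,g2]) = a+b+c+d+e + (if g0 \<noteq> Emp then 1 else 0) + (if g1 \<noteq> Emp then 1 else 0) + (if g2 \<noteq> Emp then 1 else 0)"
  unfolding mwt_def verts_Tp edges_Tp by (simp only: sep_insert; simp)

lemma z0_chain: "is_chain Theta' 2 3 z0"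
proof -
  have "\<forall>b\<in>set (map snd z0L). valid_mono Theta' b \<and> mdeg Theta' b = 2 \<and> mwt Theta' b = 3"
    unfolding z0L_def by (simp add: valid_Tp mdeg_Tp mwt_Tp)
  then show ?thesis unfolding is_chain_def z0_def
    using supp_lc[of z0L] finite_subset by blast
qed

lemma z0_cycle: "is_cycle Theta' 2 3 z0"
  using z0_chain z0_bd by (simp add: is_cycle_def)

lemma ind_shift: "\<sigma> 2 = Emp \<Longrightarrow> ind (m0,\<sigma>0) (m, \<sigma>(2:=Hlf 8)) = (if \<sigma>0 2 = Hlf 8 then ind (m0, \<sigma>0(2:=Emp)) (m,\<sigma>) else 0)"
  by (auto simp: ind_def fun_eq_iff)

lemma ind_ne2: "snd b 2 \<noteq> snd X 2 \<Longrightarrow> ind X b = 0"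
  by (auto simp: ind_def)

definition Lstar :: "(int \<times> mono) list" where "Lstar =
  [(1,(Lm[0,0,1,0,0],Lg[Hlf 0,Emp,Emp])), (-1,(Lm[0,0,1,0,0],Lg[Hlf 2,Emp,Emp])),
   (1,(Lm[0,1,0,0,0],Lg[Hlf 4,Emp,Emp])), (-1,(Lm[0,1,0,0,0],Lg[Hlf 0,Emp,Emp])),
   (1,(Lm[1,0,0,0,0],Lg[Hlf 2,Emp,Emp])), (-1,(Lm[1,0,0,0,0],Lg[Hlf 4,Emp,Emp]))]"

lemma star_lc: "star_cycle Theta_v 0 0 2 4 = lc Lstar"
proof -
  have e: "(\<lambda>_. 0::nat)(k := v) = (Lm [0,0,0,0,0])(k:=v)" "(\<lambda>_. Emp)(k := g) = (Lg [Emp,Emp,Emp])(k:=g)" for k v g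
    by (simp_all add: Lm0 Lg0)
  show ?thesis
    unfolding star_cycle_def lc_def Lstar_def Let_def he_Tv e by (rule ext) simp
qed

lemma psi_z0: "psi 2 8 z0 = star_cycle Theta_v 0 0 2 4"
proof
  fix b :: mono
  obtain m \<sigma> where b: "b = (m, \<sigma>)" by (cases b)
  show "psi 2 8 z0 b = star_cycle Theta_v 0 0 2 4 b"
  proof (cases "\<sigma> 2 = Emp")
    case True
    then show ?thesis unfolding b psi_def star_lc z0_def lc_def z0L_def Lstar_def
      by (simp add: ind_shift)
  next
    case False
    then show ?thesis unfolding b psi_def star_lc lc_def Lstar_def
      by (simp add: ind_ne2)
  qed
qed


lemma isHlfE: "isHlf g \<Longrightarrow> \<exists>h. g = Hlf h" by (cases g) auto

lemma form3:
  assumes v: "valid_mono Theta' (m,\<tau>)" and d: "mdeg Theta' (m,\<tau>) = 3" and w: "mwt Theta' (m,\<tau>) = 3"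
  shows "m = Lm [0,0,0,0,0] \<and> (\<exists>x y z. \<tau> = Lg [Hlf x, Hlf y, Hlf z] \<and> x \<in> {0,2,4,6} \<and> y \<in> {1,3,5,9} \<and> z \<in> {7,8})"
proof -
  have ve: "\<And>e. m e \<noteq> 0 \<Longrightarrow> e \<in> {0,1,2,3,4}" using v unfolding valid_mono_def edges_Tp fst_conv by blast
  have vw: "\<And>w. w \<notin> {0,1,2} \<Longrightarrow> \<tau> w = Emp" using v unfolding valid_mono_def verts_Tp snd_conv by blast
  have vh: "\<And>w h. \<tau> w = Hlf h \<Longrightarrow> h \<in> H_at Theta' w" using v unfolding valid_mono_def snd_conv by blast
  have d': "card {w \<in> {0,1,2::nat}. isHlf (\<tau> w)} = 3" using d unfolding mdeg_def verts_Tp snd_conv .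
  have A: "{w \<in> {0,1,2}. isHlf (\<tau> w)} = {0,1,2::nat}"
  proof (rule card_subset_eq)
    show "finite {0,1,2::nat}" by simp
    show "{w \<in> {0,1,2}. isHlf (\<tau> w)} \<subseteq> {0,1,2::nat}" by blast
    show "card {w \<in> {0,1,2}. isHlf (\<tau> w)} = card {0,1,2::nat}" using d' by simp
  qed
  have "isHlf (\<tau> 0)" "isHlf (\<tau> 1)" "isHlf (\<tau> 2)" using A by blast+
  then obtain x y z where xyz: "\<tau> 0 = Hlf x" "\<tau> 1 = Hlf y" "\<tau> 2 = Hlf z" by (metis isHlfE)
  have hx: "x \<in> {0,2,4,6}" "y \<in> {1,3,5,9}" "z \<in> {7,8}"
    using vh[OF xyz(1)] vh[OF xyz(2)] vh[OF xyz(3)] unfolding H_Tp by blast+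
  have B: "{w \<in> {0,1,2}. \<tau> w \<noteq> Emp} = {0,1,2::nat}" using xyz by auto
  have "(\<Sum>e\<in>{0,1,2,3,4}. m e) + card {w \<in> {0,1,2::nat}. \<tau> w \<noteq> Emp} = 3"
    using w unfolding mwt_def edges_Tp verts_Tp snd_conv fst_conv .
  then have "(\<Sum>e\<in>{0,1,2,3,4::nat}. m e) = 0" unfolding B by simp
  then have me: "\<forall>e\<in>{0,1,2,3,4::nat}. m e = 0" by (subst (asm) sum_eq_0_iff) auto
  have "m = Lm [0,0,0,0,0]"
  proof
    fix e
    show "m e = Lm [0,0,0,0,0] e" unfolding Lm0 using me ve by blast
  qed
  moreover have "\<tau> = Lg [Hlf x, Hlf y, Hlf z]"
  proof
    fix w
    show "\<tau> w = Lg [Hlf x, Hlf y, Hlf z] w"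
    proof (cases "w \<in> {0,1,2}")
      case True then show ?thesis using xyz by auto
    next
      case False then show ?thesis using vw[OF False] by (auto simp: Lg_def)
    qed
  qed
  ultimately show ?thesis using hx by blast
qed

lemma form3D: "is_chain Theta' 3 3 D \<Longrightarrow> b \<in> supp D \<Longrightarrow>
  \<exists>x y z. b = (Lm [0,0,0,0,0], Lg [Hlf x, Hlf y, Hlf z]) \<and> x \<in> {0,2,4,6} \<and> y \<in> {1,3,5,9} \<and> z \<in> {7,8}"
proof -
  assume c: "is_chain Theta' 3 3 D" and b: "b \<in> supp D"
  have "valid_mono Theta' (fst b, snd b) \<and> mdeg Theta' (fst b, snd b) = 3 \<and> mwt Theta' (fst b, snd b) = 3"
    using c b by (simp add: is_chain_def)
  then have "fst b = Lm [0,0,0,0,0] \<and> (\<exists>x y z. snd b = Lg [Hlf x, Hlf y, Hlf z] \<and> x \<in> {0,2,4,6} \<and> y \<in> {1,3,5,9} \<and> z \<in> {7,8})"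
    using form3 by blast
  then show ?thesis by (metis prod.collapse)
qed

definition f8 :: "mono \<Rightarrow> mono" where "f8 b = (fst b, (snd b)(2 := Emp))"

lemma supp_psi: "supp (psi 2 8 D) = f8 ` {b \<in> supp D. snd b 2 = Hlf 8}"
proof (rule set_eqI)
  fix c :: mono
  obtain m \<sigma> where c: "c = (m,\<sigma>)" by (cases c)
  show "c \<in> supp (psi 2 8 D) \<longleftrightarrow> c \<in> f8 ` {b \<in> supp D. snd b 2 = Hlf 8}"
  proof
    assume "c \<in> supp (psi 2 8 D)"
    then have h: "\<sigma> 2 = Emp" "D (m, \<sigma>(2 := Hlf 8)) \<noteq> 0"
      by (auto simp: supp_def psi_def c split: if_splits)
    then have "c = f8 (m, \<sigma>(2 := Hlf 8))" by (auto simp: c f8_def fun_eq_iff)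
    then show "c \<in> f8 ` {b \<in> supp D. snd b 2 = Hlf 8}" using h by (auto simp: supp_def)
  next
    assume "c \<in> f8 ` {b \<in> supp D. snd b 2 = Hlf 8}"
    then obtain b where b: "b \<in> supp D" "snd b 2 = Hlf 8" "c = f8 b" by auto
    then have "(snd b)(2 := Emp, 2 := Hlf 8) = snd b" by (auto simp: fun_eq_iff)
    then show "c \<in> supp (psi 2 8 D)" using b by (auto simp: supp_def psi_def f8_def)
  qed
qed

lemma psi_f8: "snd b 2 = Hlf 8 \<Longrightarrow> psi 2 8 D (f8 b) = D b"
proof -
  assume h: "snd b 2 = Hlf 8"
  then have "(snd b)(2 := Emp, 2 := Hlf 8) = snd b" by (auto simp: fun_eq_iff)
  then show ?thesis by (cases b) (simp add: psi_def f8_def)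
qed

lemma inj_f8: "inj_on f8 {b \<in> S. snd b 2 = Hlf 8}"
proof (rule inj_onI)
  fix a b assume a: "a \<in> {b \<in> S. snd b 2 = Hlf 8}" and b: "b \<in> {b \<in> S. snd b 2 = Hlf 8}" and e: "f8 a = f8 b"
  then have "fst a = fst b" by (simp add: f8_def)
  moreover have "snd a = snd b"
  proof
    fix w
    have "((snd a)(2 := Emp)) w = ((snd b)(2 := Emp)) w" using e by (simp add: f8_def)
    then show "snd a w = snd b w"
      using a b by (cases "w = 2") auto
  qed
  ultimately show "a = b" by (simp add: prod_eq_iff)
qed


lemma comm_mono: "\<sigma>' 2 = Emp \<Longrightarrow> \<tau> 17 = Emp \<Longrightarrow> \<tau> 18 = Emp \<Longrightarrow>
  bd_mono Theta' (m,\<tau>) (m', \<sigma>'(2 := Hlf 8)) = (if \<tau> 2 = Hlf 8 then bd_mono Theta_v (m, \<tau>(2 := Emp)) (m',\<sigma>') else 0)"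
  by (simp add: bdm_Tp bdm_Tv ind_shift fun_upd_twist[where a=0 and c=2] fun_upd_twist[where a="Suc 0" and c=2] split: gen.split)

lemma bdv_zero: "\<sigma> 2 = Emp \<Longrightarrow> \<sigma> 17 = Emp \<Longrightarrow> \<sigma> 18 = Emp \<Longrightarrow> snd b' 2 \<noteq> Emp \<Longrightarrow>
  bd_mono Theta_v (m,\<sigma>) b' = 0"
  by (simp add: bdm_Tv ind_ne2 split: gen.split)

lemma psi_bd: assumes D: "is_chain Theta' 3 3 D"
  shows "psi 2 8 (bd Theta' D) = bd Theta_v (psi 2 8 D)"
proof
  fix c :: mono
  obtain m' \<sigma>' where c: "c = (m',\<sigma>')" by (cases c)
  have fin: "finite (supp D)" using D by (simp add: is_chain_def)
  have t1718: "snd b 17 = Emp \<and> snd b 18 = Emp" if "b \<in> supp D" for b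
    using form3D[OF D that] by fastforce
  show "psi 2 8 (bd Theta' D) c = bd Theta_v (psi 2 8 D) c"
  proof (cases "\<sigma>' 2 = Emp")
    case True
    let ?S = "{b \<in> supp D. snd b 2 = Hlf 8}"
    have "psi 2 8 (bd Theta' D) c = (\<Sum>b\<in>supp D. D b * bd_mono Theta' b (m', \<sigma>'(2 := Hlf 8)))"
      using True by (simp add: c psi_def bd_def)
    also have "\<dots> = (\<Sum>b\<in>supp D. if snd b 2 = Hlf 8 then D b * bd_mono Theta_v (f8 b) c else 0)"
    proof (rule sum.cong[OF refl])
      fix b assume b: "b \<in> supp D"
      obtain m \<tau> where bb: "b = (m, \<tau>)" by (cases b)
      show "D b * bd_mono Theta' b (m', \<sigma>'(2 := Hlf 8)) = (if snd b 2 = Hlf 8 then D b * bd_mono Theta_v (f8 b) c else 0)"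
        using comm_mono[of \<sigma>' \<tau> m m'] True t1718[OF b] by (simp add: bb c f8_def)
    qed
    also have "\<dots> = (\<Sum>b\<in>?S. D b * bd_mono Theta_v (f8 b) c)"
      by (simp add: sum.inter_filter[OF fin])
    also have "\<dots> = (\<Sum>b\<in>?S. psi 2 8 D (f8 b) * bd_mono Theta_v (f8 b) c)"
      by (rule sum.cong[OF refl]) (simp add: psi_f8)
    also have "\<dots> = (\<Sum>b'\<in>f8 ` ?S. psi 2 8 D b' * bd_mono Theta_v b' c)"
      by (simp add: sum.reindex[OF inj_f8])
    also have "\<dots> = bd Theta_v (psi 2 8 D) c" by (simp add: bd_def supp_psi)
    finally show ?thesis .
  next
    case False
    have "bd Theta_v (psi 2 8 D) c = 0" unfolding bd_def supp_psi
    proof (rule sum.neutral, rule ballI)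
      fix x assume "x \<in> f8 ` {b \<in> supp D. snd b 2 = Hlf 8}"
      then obtain b where b: "b \<in> supp D" "x = f8 b" by auto
      obtain m \<tau> where bb: "b = (m, \<tau>)" by (cases b)
      show "psi 2 8 D x * bd_mono Theta_v x c = 0"
        using bdv_zero[of "\<tau>(2 := Emp)" c m] t1718[OF b(1)] False by (simp add: bb b(2) f8_def c)
    qed
    then show ?thesis using False by (simp add: c psi_def)
  qed
qed

lemma psiD_form: "is_chain Theta' 3 3 D \<Longrightarrow> c \<in> supp (psi 2 8 D) \<Longrightarrow>
   \<exists>x y. c = (Lm [0,0,0,0,0], Lg [Hlf x, Hlf y, Emp]) \<and> x \<in> {0,2,4,6} \<and> y \<in> {1,3,5,9}"
proof -
  assume D: "is_chain Theta' 3 3 D" and c: "c \<in> supp (psi 2 8 D)"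
  then obtain b where b: "b \<in> supp D" "snd b 2 = Hlf 8" "c = f8 b" by (auto simp: supp_psi)
  obtain x y z where "b = (Lm [0,0,0,0,0], Lg [Hlf x, Hlf y, Hlf z])" "x \<in> {0,2,4,6}" "y \<in> {1,3,5,9}"
    using form3D[OF D b(1)] by blast
  then show ?thesis using b by (auto simp: f8_def)
qed

lemma mono_Tv: "x \<in> {0,2,4,6} \<Longrightarrow> y \<in> {1,3,5,9} \<Longrightarrow>
   valid_mono Theta_v (Lm [0,0,0,0,0], Lg [Hlf x, Hlf y, Emp]) \<and>
   mdeg Theta_v (Lm [0,0,0,0,0], Lg [Hlf x, Hlf y, Emp]) = 2 \<and>
   mwt Theta_v (Lm [0,0,0,0,0], Lg [Hlf x, Hlf y, Emp]) = 2"
proof (intro conjI)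
  assume x: "x \<in> {0,2,4,6}" and y: "y \<in> {1,3,5,9}"
  show "valid_mono Theta_v (Lm [0,0,0,0,0], Lg [Hlf x, Hlf y, Emp])"
    unfolding valid_mono_def
    using x y by (auto simp: Lm0 Lg_def nth_Cons H_Tv H_Tv1 split: if_splits nat.splits)
  show "mdeg Theta_v (Lm [0,0,0,0,0], Lg [Hlf x, Hlf y, Emp]) = 2"
    unfolding mdeg_def verts_Tv by (simp only: sep_insert; simp)
  show "mwt Theta_v (Lm [0,0,0,0,0], Lg [Hlf x, Hlf y, Emp]) = 2"
    unfolding mwt_def verts_Tv edges_Tv by (simp only: sep_insert; simp)
qed

lemma supp_scale: "k \<noteq> 0 \<Longrightarrow> supp (\<lambda>b. k * c b) = supp (c::chain)"
  by (auto simp: supp_def)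

lemma psiD_chain: assumes D: "is_chain Theta' 3 3 D" and k: "k \<noteq> 0"
  shows "is_chain Theta_v 2 2 (\<lambda>b. k * psi 2 8 D b)"
proof -
  have fin: "finite (supp D)" using D by (simp add: is_chain_def)
  have "finite (supp (psi 2 8 D))" unfolding supp_psi using fin by simp
  moreover have "\<forall>c\<in>supp (psi 2 8 D). valid_mono Theta_v c \<and> mdeg Theta_v c = 2 \<and> mwt Theta_v c = 2"
    using psiD_form[OF D] mono_Tv by blast
  ultimately show ?thesis unfolding is_chain_def supp_scale[OF k] by blast
qed

lemma bd_scale: "k \<noteq> 0 \<Longrightarrow> bd G (\<lambda>b. k * c b) = (\<lambda>b'. k * bd G c b')"
  by (simp add: bd_def supp_scale sum_distrib_left mult.assoc)

definition P1 :: mono where "P1 = (Lm [0,1,0,0,0], Lg [Hlf 0, Emp, Emp])"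
definition P2 :: mono where "P2 = (Lm [1,0,0,0,0], Lg [Emp, Hlf 3, Emp])"
definition phi :: "chain \<Rightarrow> int" where "phi c = c P1 + c P2"

lemma phi_star: "phi (star_cycle Theta_v 0 0 2 4) = -1"
  by (simp add: phi_def star_lc lc_def Lstar_def ind_def P1_def P2_def)

lemma bdP: "x \<in> {0,2,4,6} \<Longrightarrow> y \<in> {1,3,5,9} \<Longrightarrow>
  bd_mono Theta_v (Lm [0,0,0,0,0], Lg [Hlf x, Hlf y, Emp]) P1 + bd_mono Theta_v (Lm [0,0,0,0,0], Lg [Hlf x, Hlf y, Emp]) P2 = 0"
  by (auto simp: bdm_Tv ind_def P1_def P2_def)

lemma phi_bd: assumes D: "is_chain Theta' 3 3 D"
  shows "phi (bd Theta_v (psi 2 8 D)) = 0"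
proof -
  have "phi (bd Theta_v (psi 2 8 D)) = (\<Sum>b\<in>supp (psi 2 8 D). psi 2 8 D b * (bd_mono Theta_v b P1 + bd_mono Theta_v b P2))"
    by (simp add: phi_def bd_def sum.distrib[symmetric] distrib_left)
  also have "\<dots> = 0"
  proof (rule sum.neutral, rule ballI)
    fix b assume "b \<in> supp (psi 2 8 D)"
    then obtain x y where "b = (Lm [0,0,0,0,0], Lg [Hlf x, Hlf y, Emp])" "x \<in> {0,2,4,6}" "y \<in> {1,3,5,9}"
      using psiD_form[OF D] by blast
    then show "psi 2 8 D b * (bd_mono Theta_v b P1 + bd_mono Theta_v b P2) = 0" using bdP by simp
  qed
  finally show ?thesis .
qed

theorem mainTheorem5:
  fixes z :: chain
  assumes z_red: "reduced_at 2 7 8 z"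
    and z_cyc: "is_cycle Theta' 2 3 z"
    and z_gen: "\<forall>c. is_cycle Theta' 2 3 c \<longrightarrow>
                   (\<exists>n::int. homologous Theta' 2 3 c (\<lambda>b. n * z b))"
  shows "\<exists>\<epsilon>::int. (\<epsilon> = 1 \<or> \<epsilon> = -1) \<and>
           homologous Theta_v 1 2 (psi 2 8 z) (\<lambda>b. \<epsilon> * star_cycle Theta_v 0 0 2 4 b)"
proof -
  obtain n :: int where "homologous Theta' 2 3 z0 (\<lambda>b. n * z b)"
    using z_gen z0_cycle by blast
  then obtain D where D: "is_chain Theta' 3 3 D" and eq: "(\<lambda>b. z0 b - n * z b) = bd Theta' D"
    by (auto simp: homologous_def numeral_3_eq_3)
  have E: "star_cycle Theta_v 0 0 2 4 b - n * psi 2 8 z b = bd Theta_v (psi 2 8 D) b" for b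
  proof -
    obtain m \<sigma> where b: "b = (m, \<sigma>)" by (cases b)
    have "psi 2 8 (\<lambda>b. z0 b - n * z b) b = psi 2 8 z0 b - n * psi 2 8 z b"
      by (simp add: b psi_def)
    then show ?thesis using eq psi_bd[OF D] psi_z0 by metis
  qed
  have "phi (star_cycle Theta_v 0 0 2 4) - n * phi (psi 2 8 z) = phi (bd Theta_v (psi 2 8 D))"
    using E[of P1] E[of P2] by (simp add: phi_def algebra_simps)
  then have "n * phi (psi 2 8 z) = -1" using phi_star phi_bd[OF D] by simp
  then have n: "n = 1 \<or> n = -1" using zmult_eq_neg1_iff by blast
  then have n0: "- n \<noteq> 0" by auto
  have "(\<lambda>b. psi 2 8 z b - n * star_cycle Theta_v 0 0 2 4 b) = bd Theta_v (\<lambda>b. (- n) * psi 2 8 D b)"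
  proof
    fix b
    show "psi 2 8 z b - n * star_cycle Theta_v 0 0 2 4 b = bd Theta_v (\<lambda>b. (- n) * psi 2 8 D b) b"
      unfolding bd_scale[OF n0] E[of b, symmetric] using n by auto
  qed
  moreover have "is_chain Theta_v (Suc 1) 2 (\<lambda>b. (- n) * psi 2 8 D b)"
    using psiD_chain[OF D n0] by (simp add: numeral_2_eq_2)
  ultimately show ?thesis using n unfolding homologous_def by blast
qed

end
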